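(* Let $G=(V,E)$ be a graph, $v\in V$, $S_v$ the partial star product of $v$, and suppose that the number $k$ of equivalence classes of $\mathfrak d_v^*$ that contain an edge of $E_v$ is $1$ or $2$. Let $\mathbb S_1,\dots,\mathbb S_k$ be the corresponding star factors. Then $S_v\simeq\Box_{i=1}^k\mathbb S_i$.
   Context: All graphs are finite, simple and undirected. For $G=(V,E)$ and $v\in V$, $E_v$ is the set of edges incident to $v$. For two distinct adjacent edges $e=(v,u)$, $f=(v,w)$, a square spanned by $e$ and $f$ is a $4$-cycle $v,u,x,w,v$ with $x\notin\{v,u,w\}$; it is chordless if neither $(u,w)$ nor $(v,x)$ is an edge. In a chordless square $v,u,x,w$, $(x,w)$ is opposite to $(v,u)$ and $(x,u)$ is opposite to $(v,w)$ (and vice versa). The relation $\delta(G)$ on $E$: $(e,f)\in\delta(G)$ iff (i) $e,f$ are distinct adjacent edges and it is not the case that $e$ and $f$ span exactly one square and that square is chordless; or (ii) $e,f$ are opposite edges of a chordless square; or (iii) $e=f$. Define $\mathfrak d_v=((E_v\times E)\cup(E\times E_v))\cap\delta(G)$ and $\mathfrak d_v^*$ the finest equivalence relation on $E$ containing $\mathfrak d_v$. Let $F_v\subseteq E\setminus E_v$ be the set of edges that are the edges not incident to $v$ of some chordless square spanned by two edges $e,e'\in E_v$ with $(e,e')\notin\mathfrak d_v^*$. The partial star product $S_v$ is the subgraph of $G$ with edge set $E_v\cup F_v$ and vertex set the endpoints of these edges. For an equivalence class $\varphi$ of $\mathfrak d_v^*$, $N_\varphi(v)=\{u:(v,u)\in\varphi\}$;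 the star factor of $\varphi$ is the graph with vertex set $N_\varphi(v)\cup\{v\}$ and edge set $\{(v,u):u\in N_\varphi(v)\}$. $\Box$ denotes the Cartesian graph product. *)

theory Defs
  imports Main
begin

definition graph :: "'a set \<Rightarrow> 'a set set \<Rightarrow> bool" where
  "graph V E \<longleftrightarrow> finite V \<and> (\<forall>e\<in>E. \<exists>u w. e = {u, w} \<and> u \<noteq> w \<and> u \<in> V \<and> w \<in> V)"

definition inc :: "'a set set \<Rightarrow> 'a \<Rightarrow> 'a set set" where
  "inc E v = {e \<in> E. v \<in> e}"

definition sq_cycle :: "'a set set \<Rightarrow> 'a \<Rightarrow> 'a \<Rightarrow> 'a \<Rightarrow> 'a \<Rightarrow> bool" where
  "sq_cycle E a b c d \<longleftrightarrow> distinct [a, b, c, d] \<and>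
     {a, b} \<in> E \<and> {b, c} \<in> E \<and> {c, d} \<in> E \<and> {d, a} \<in> E"

definition chordless_sq :: "'a set set \<Rightarrow> 'a \<Rightarrow> 'a \<Rightarrow> 'a \<Rightarrow> 'a \<Rightarrow> bool" where
  "chordless_sq E a b c d \<longleftrightarrow> sq_cycle E a b c d \<and> {a, c} \<notin> E \<and> {b, d} \<notin> E"

definition adj_edges :: "'a set set \<Rightarrow> 'a set \<Rightarrow> 'a set \<Rightarrow> bool" where
  "adj_edges E e f \<longleftrightarrow> e \<in> E \<and> f \<in> E \<and> e \<noteq> f \<and> e \<inter> f \<noteq> {}"

definition one_chordless_square :: "'a set set \<Rightarrow> 'a set \<Rightarrow> 'a set \<Rightarrow> bool" where
  "one_chordless_square E e f \<longleftrightarrow>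
     (\<exists>v u w. e = {v, u} \<and> f = {v, w} \<and> v \<noteq> u \<and> v \<noteq> w \<and> u \<noteq> w \<and>
        (\<exists>!x. sq_cycle E v u x w) \<and> (\<forall>x. sq_cycle E v u x w \<longrightarrow> chordless_sq E v u x w))"

definition opposite :: "'a set set \<Rightarrow> 'a set \<Rightarrow> 'a set \<Rightarrow> bool" where
  "opposite E e f \<longleftrightarrow> (\<exists>a b c d. chordless_sq E a b c d \<and>
     ((e = {a, b} \<and> f = {c, d}) \<or> (e = {b, c} \<and> f = {d, a})))"

definition delta :: "'a set set \<Rightarrow> ('a set \<times> 'a set) set" where
  "delta E = {(e, f). e \<in> E \<and> f \<in> E \<and>
     ((adj_edges E e f \<and> \<not> one_chordless_square E e f) \<or> opposite E e f \<or> e = f)}"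

definition dv :: "'a set set \<Rightarrow> 'a \<Rightarrow> ('a set \<times> 'a set) set" where
  "dv E v = ((inc E v \<times> E) \<union> (E \<times> inc E v)) \<inter> delta E"

definition dv_star :: "'a set set \<Rightarrow> 'a \<Rightarrow> ('a set \<times> 'a set) set" where
  "dv_star E v = \<Inter> {R. equiv E R \<and> dv E v \<subseteq> R}"

definition Fv :: "'a set set \<Rightarrow> 'a \<Rightarrow> 'a set set" where
  "Fv E v = {g \<in> E - inc E v. \<exists>u w x.
      {v, u} \<in> E \<and> {v, w} \<in> E \<and> ({v, u}, {v, w}) \<notin> dv_star E v \<and>
      chordless_sq E v u x w \<and> (g = {u, x} \<or> g = {x, w})}"

definition Sv_E :: "'a set set \<Rightarrow> 'a \<Rightarrow> 'a set set" where
  "Sv_E E v = inc E v \<union> Fv E v"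

definition Sv_V :: "'a set set \<Rightarrow> 'a \<Rightarrow> 'a set" where
  "Sv_V E v = \<Union> (Sv_E E v)"

definition star_classes :: "'a set set \<Rightarrow> 'a \<Rightarrow> 'a set set set" where
  "star_classes E v = {\<phi> \<in> E // dv_star E v. \<phi> \<inter> inc E v \<noteq> {}}"

definition N_phi :: "'a set set \<Rightarrow> 'a \<Rightarrow> 'a set" where
  "N_phi \<phi> v = {u. {v, u} \<in> \<phi>}"

definition star_V :: "'a set set \<Rightarrow> 'a \<Rightarrow> 'a set" where
  "star_V \<phi> v = insert v (N_phi \<phi> v)"

definition star_E :: "'a set set \<Rightarrow> 'a \<Rightarrow> 'a set set" where
  "star_E \<phi> v = {{v, u} | u. u \<in> N_phi \<phi> v}"

definition cprod_V :: "'a set \<Rightarrow> 'b set \<Rightarrow> ('a \<times> 'b) set" where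
  "cprod_V V1 V2 = V1 \<times> V2"

definition cprod_E :: "'a set \<Rightarrow> 'a set set \<Rightarrow> 'b set \<Rightarrow> 'b set set \<Rightarrow> ('a \<times> 'b) set set" where
  "cprod_E V1 E1 V2 E2 =
     {{(a, b), (a', b')} | a b a' b'. a \<in> V1 \<and> a' \<in> V1 \<and> b \<in> V2 \<and> b' \<in> V2 \<and>
        ((a = a' \<and> {b, b'} \<in> E2) \<or> (b = b' \<and> {a, a'} \<in> E1))}"

definition graph_iso :: "'a set \<Rightarrow> 'a set set \<Rightarrow> 'b set \<Rightarrow> 'b set set \<Rightarrow> bool" where
  "graph_iso V1 E1 V2 E2 \<longleftrightarrow> (\<exists>f. bij_betw f V1 V2 \<and>
     (\<forall>x\<in>V1. \<forall>y\<in>V1. {x, y} \<in> E1 \<longleftrightarrow> {f x, f y} \<in> E2))"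

end

theory Submission
  imports Defs
begin


lemma dv_sub: "dv E v \<subseteq> E \<times> E" by (auto simp: dv_def delta_def)

lemma equiv_dv_star: "equiv E (dv_star E v)"
proof -
  let ?F = "{R. equiv E R \<and> dv E v \<subseteq> R}"
  have ne: "E \<times> E \<in> ?F" using dv_sub[of E v] by (auto simp: equiv_def refl_on_def sym_def trans_def)
  show ?thesis unfolding dv_star_def
  proof (rule equivI)
    show "\<Inter> ?F \<subseteq> E \<times> E" using ne by blast
    show "refl_on E (\<Inter> ?F)" by (auto simp: refl_on_def equiv_def)
    show "sym (\<Inter> ?F)" unfolding sym_def equiv_def by auto
    show "trans (\<Inter> ?F)"
    proof (rule transI)
      fix x y z assume "(x,y) \<in> \<Inter> ?F" "(y,z) \<in> \<Inter> ?F"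
      then show "(x,z) \<in> \<Inter> ?F" by (auto simp: equiv_def dest: transD)
    qed
  qed
qed

lemma dv_sub_star: "dv E v \<subseteq> dv_star E v" unfolding dv_star_def by auto

lemma common2: "{a,b} = {v0,u0} \<Longrightarrow> {a,d} = {v0,w0} \<Longrightarrow> b \<noteq> d \<Longrightarrow> a\<noteq>b \<Longrightarrow> a\<noteq>d \<Longrightarrow> v0\<noteq>u0 \<Longrightarrow> v0=a \<and> u0=b \<and> w0=d"
  unfolding doubleton_eq_iff by blast

lemma sq_rot: "sq_cycle E a b c d \<Longrightarrow> sq_cycle E b a d c"
  by (auto simp: sq_cycle_def insert_commute)
lemma sq_rev: "sq_cycle E a b c d \<Longrightarrow> sq_cycle E a d c b"
  by (auto simp: sq_cycle_def insert_commute)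

lemma two_sq_delta:
  assumes "sq_cycle E a b c d" "sq_cycle E a b c' d" "c \<noteq> c'"
  shows "({a,b},{a,d}) \<in> delta E"
proof -
  have d: "a \<noteq> b" "a \<noteq> d" "b \<noteq> d" "{a,b} \<in> E" "{a,d} \<in> E"
    using assms(1) by (auto simp: sq_cycle_def insert_commute)
  have "\<not> one_chordless_square E {a,b} {a,d}"
  proof
    assume "one_chordless_square E {a,b} {a,d}"
    then obtain v0 u0 w0 where h: "{a,b} = {v0,u0}" "{a,d} = {v0,w0}" "v0\<noteq>u0" "v0 \<noteq> w0" "u0\<noteq>w0"
      "\<exists>!x. sq_cycle E v0 u0 x w0" unfolding one_chordless_square_def by (elim exE conjE) (rule that; assumption)
    have "v0 = a \<and> u0 = b \<and> w0 = d" using common2[OF h(1) h(2)] h(3) d by blast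
    with h(6) assms show False by auto
  qed
  moreover have "b \<notin> {a,d}" using d by simp
  then have "{a,b} \<noteq> {a,d}" by blast
  then have "adj_edges E {a,b} {a,d}" using d unfolding adj_edges_def by blast
  ultimately show ?thesis using d unfolding delta_def by blast
qed

lemma opp_delta:
  assumes "chordless_sq E a b c d"
  shows "({b,c},{d,a}) \<in> delta E" "({a,b},{c,d}) \<in> delta E"
proof -
  have e: "{a,b} \<in> E" "{b,c} \<in> E" "{c,d} \<in> E" "{d,a} \<in> E"
    using assms by (auto simp: chordless_sq_def sq_cycle_def)
  have "opposite E {b,c} {d,a}" unfolding opposite_def using assms by blast
  then show "({b,c},{d,a}) \<in> delta E" using e unfolding delta_def by blast
  have "opposite E {a,b} {c,d}" unfolding opposite_def using assms by blast
  then show "({a,b},{c,d}) \<in> delta E" using e unfolding delta_def by blast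
qed

lemma ocs_unfold:
  assumes "one_chordless_square E {v,u} {v,w}" "u \<noteq> w" "v \<noteq> u" "v \<noteq> w"
  shows "(\<exists>!x. sq_cycle E v u x w) \<and> (\<forall>x. sq_cycle E v u x w \<longrightarrow> chordless_sq E v u x w)"
proof -
  obtain v0 u0 w0 where h: "{v,u} = {v0,u0}" "{v,w} = {v0,w0}" "v0\<noteq>u0" "v0 \<noteq> w0" "u0\<noteq>w0"
      "\<exists>!x. sq_cycle E v0 u0 x w0" "\<forall>x. sq_cycle E v0 u0 x w0 \<longrightarrow> chordless_sq E v0 u0 x w0"
    using assms(1) unfolding one_chordless_square_def by (elim exE conjE) (rule that; assumption)
  have "v0 = v" "u0 = u" "w0 = w" using common2[OF h(1) h(2)] h(3) assms(2-4) by blast+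
  with h(6,7) show ?thesis by simp
qed

lemma graph_iso_inv:
  assumes "bij_betw g A B" "\<forall>p\<in>A. \<forall>q\<in>A. {g p, g q} \<in> EB \<longleftrightarrow> {p,q} \<in> EA"
  shows "graph_iso B EB A EA"
proof -
  let ?f = "inv_into A g"
  have b: "bij_betw ?f B A" using assms(1) by (rule bij_betw_inv_into)
  have "\<forall>x\<in>B. \<forall>y\<in>B. {x, y} \<in> EB \<longleftrightarrow> {?f x, ?f y} \<in> EA"
  proof (intro ballI)
    fix x y assume "x \<in> B" "y \<in> B"
    then have "g (?f x) = x" "g (?f y) = y" "?f x \<in> A" "?f y \<in> A"
      using assms(1) b by (auto simp: bij_betw_def f_inv_into_f)
    then show "{x, y} \<in> EB \<longleftrightarrow> {?f x, ?f y} \<in> EA" using assms(2)[rule_format, of "?f x" "?f y"] by simp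
  qed
  with b show ?thesis unfolding graph_iso_def by blast
qed

lemma img_edge_iff:
  assumes "inj_on g A" "\<forall>S\<in>PE. S \<subseteq> A" "p \<in> A" "q \<in> A"
  shows "{g p, g q} \<in> (`) g ` PE \<longleftrightarrow> {p,q} \<in> PE"
proof
  assume "{g p, g q} \<in> (`) g ` PE"
  then obtain S where S: "S \<in> PE" "{g p, g q} = g ` S" by blast
  then have "g ` S = g ` {p,q}" by simp
  then have "S = {p,q}" using inj_on_image_eq_iff[of g A S "{p,q}"] assms S by auto
  with S show "{p,q} \<in> PE" by simp
next
  assume "{p,q} \<in> PE"
  moreover have "{g p, g q} = g ` {p,q}" by simp
  ultimately show "{g p, g q} \<in> (`) g ` PE" by (rule rev_image_eqI)
qed



lemma dbl_cases: "{b,b'} = {c,d} \<Longrightarrow> (b = c \<and> b' = d) \<or> (b = d \<and> b' = c)"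
  unfolding doubleton_eq_iff by blast

lemma edge_form: "graph V E \<Longrightarrow> e \<in> E \<Longrightarrow> \<exists>a b. e = {a,b} \<and> a \<noteq> b"
  unfolding graph_def by blast

lemma edge_ne: "graph V E \<Longrightarrow> {x,y} \<in> E \<Longrightarrow> x \<noteq> y"
proof
  assume g: "graph V E" and e: "{x,y} \<in> E" and xy: "x = y"
  obtain a b where "{x,y} = {a,b}" "a \<noteq> b" using edge_form[OF g e] by blast
  with xy show False by (metis doubleton_eq_iff)
qed

lemma inc_form: "graph V E \<Longrightarrow> e \<in> inc E v \<Longrightarrow> \<exists>u. e = {v,u} \<and> u \<noteq> v \<and> {v,u} \<in> E"
proof -
  assume g: "graph V E" and e: "e \<in> inc E v"
  then have eE: "e \<in> E" "v \<in> e" by (auto simp: inc_def)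
  obtain a b where ab: "e = {a,b}" "a \<noteq> b" using edge_form[OF g eE(1)] by blast
  show ?thesis
  proof (cases "v = a")
    case True then show ?thesis using ab eE by blast
  next
    case False then have "v = b" using ab eE by blast
    then have "e = {v,a}" using ab by (simp add: insert_commute)
    then show ?thesis using ab eE \<open>v = b\<close> by blast
  qed
qed

lemma rel_same_gen: "p \<in> E // dv_star E v \<Longrightarrow> f \<in> p \<Longrightarrow> g \<in> p \<Longrightarrow> (f,g) \<in> dv_star E v"
  using in_quotient_imp_in_rel[OF equiv_dv_star, of p E v f g] by simp

lemma quot_sub: "p \<in> E // dv_star E v \<Longrightarrow> p \<subseteq> E"
  by (rule in_quotient_imp_subset[OF equiv_dv_star])

locale SP =
  fixes V :: "'a set" and E :: "'a set set" and v :: 'a and p1 p2 :: "'a set set"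
  assumes G: "graph V E" and p1: "p1 \<in> star_classes E v" and p2: "p2 \<in> star_classes E v"
    and ne: "p1 \<noteq> p2" and cls: "\<forall>e\<in>inc E v. e \<in> p1 \<or> e \<in> p2"
begin

abbreviation "R \<equiv> dv_star E v"
abbreviation "N1 \<equiv> N_phi p1 v"
abbreviation "N2 \<equiv> N_phi p2 v"

lemma p1q: "p1 \<in> E // R" using p1 by (simp add: star_classes_def)
lemma p2q: "p2 \<in> E // R" using p2 by (simp add: star_classes_def)
lemma p1s: "p1 \<subseteq> E" by (rule quot_sub[OF p1q])
lemma p2s: "p2 \<subseteq> E" by (rule quot_sub[OF p2q])

lemma rel_diff: "f \<in> p1 \<Longrightarrow> g \<in> p2 \<Longrightarrow> (f,g) \<notin> R"
  using quotient_eqI[OF equiv_dv_star p1q p2q, of f g] ne by blast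

lemma N1E: "u \<in> N1 \<Longrightarrow> {v,u} \<in> p1 \<and> {v,u} \<in> E \<and> u \<noteq> v"
  using p1s edge_ne[OF G] by (auto simp: N_phi_def)
lemma N2E: "u \<in> N2 \<Longrightarrow> {v,u} \<in> p2 \<and> {v,u} \<in> E \<and> u \<noteq> v"
  using p2s edge_ne[OF G] by (auto simp: N_phi_def)

lemma N_disj: "u \<in> N1 \<Longrightarrow> u \<notin> N2"
proof
  assume "u \<in> N1" "u \<in> N2"
  then have "{v,u} \<in> p1" "{v,u} \<in> p2" "{v,u} \<in> E" using N1E N2E by auto
  moreover have "({v,u},{v,u}) \<in> R" using equiv_dv_star[of E v] \<open>{v,u} \<in> E\<close>
    by (auto simp: equiv_def refl_on_def)
  ultimately show False using rel_diff by blast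
qed

lemma N_cover: "{v,u} \<in> E \<Longrightarrow> u \<in> N1 \<or> u \<in> N2"
  using cls by (auto simp: inc_def N_phi_def)

lemma N1ne: "N1 \<noteq> {}"
proof -
  obtain e where "e \<in> p1" "e \<in> inc E v" using p1 by (auto simp: star_classes_def)
  then obtain u where "e = {v,u}" using inc_form[OF G] by blast
  then show ?thesis using \<open>e \<in> p1\<close> by (auto simp: N_phi_def)
qed

lemma ocs: assumes "u \<in> N1" "w \<in> N2" shows "one_chordless_square E {v,u} {v,w}"
proof -
  have a: "{v,u} \<in> p1" "{v,u} \<in> E" "u \<noteq> v" using N1E[OF assms(1)] by auto
  have b: "{v,w} \<in> p2" "{v,w} \<in> E" "w \<noteq> v" using N2E[OF assms(2)] by auto
  have uw: "u \<noteq> w" using N_disj assms by blast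
  have "({v,u},{v,w}) \<notin> R" using rel_diff a b by blast
  then have "({v,u},{v,w}) \<notin> dv E v" using dv_sub_star[of E v] by blast
  moreover have "{v,u} \<in> inc E v" using a by (simp add: inc_def)
  ultimately have nd: "({v,u},{v,w}) \<notin> delta E" using b by (auto simp: dv_def)
  have "u \<notin> {v,w}" using uw a by simp
  then have "{v,u} \<noteq> {v,w}" by blast
  then have "adj_edges E {v,u} {v,w}" using a b unfolding adj_edges_def by blast
  with nd a b show ?thesis unfolding delta_def by blast
qed

definition X where "X u w = (THE x. sq_cycle E v u x w)"

lemma X_props: assumes "u \<in> N1" "w \<in> N2"
  shows "sq_cycle E v u (X u w) w" "chordless_sq E v u (X u w) w"
    "\<And>x. sq_cycle E v u x w \<Longrightarrow> x = X u w"
proof -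
  have uw: "u \<noteq> w" using N_disj assms by blast
  have h: "(\<exists>!x. sq_cycle E v u x w) \<and> (\<forall>x. sq_cycle E v u x w \<longrightarrow> chordless_sq E v u x w)"
    using ocs_unfold[OF ocs[OF assms] uw] N1E[OF assms(1)] N2E[OF assms(2)] by auto
  show s: "sq_cycle E v u (X u w) w" unfolding X_def using h theI' by metis
  show "chordless_sq E v u (X u w) w" using h s by blast
  show "\<And>x. sq_cycle E v u x w \<Longrightarrow> x = X u w" unfolding X_def using h the1_equality by metis
qed

lemma X_facts: assumes "u \<in> N1" "w \<in> N2"
  shows "X u w \<noteq> v" "X u w \<noteq> u" "X u w \<noteq> w" "{u, X u w} \<in> E" "{X u w, w} \<in> E"
    "{v, X u w} \<notin> E" "X u w \<notin> N1" "X u w \<notin> N2"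
proof -
  have c: "chordless_sq E v u (X u w) w" by (rule X_props[OF assms])
  then show "X u w \<noteq> v" "X u w \<noteq> u" "X u w \<noteq> w" "{u, X u w} \<in> E" "{X u w, w} \<in> E"
    "{v, X u w} \<notin> E" by (auto simp: chordless_sq_def sq_cycle_def)
  then show "X u w \<notin> N1" "X u w \<notin> N2" using N1E N2E by blast+
qed

end


lemma sq_intro: "distinct [a,b,c,d] \<Longrightarrow> {a,b}\<in>E \<Longrightarrow> {b,c}\<in>E \<Longrightarrow> {c,d}\<in>E \<Longrightarrow> {d,a}\<in>E \<Longrightarrow> sq_cycle E a b c d"
  unfolding sq_cycle_def by blast

lemma sq_D: assumes "sq_cycle E a b c d"
  shows "a\<noteq>b" "a\<noteq>c" "a\<noteq>d" "b\<noteq>c" "b\<noteq>d" "c\<noteq>d"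
   "{a,b}\<in>E" "{b,a}\<in>E" "{b,c}\<in>E" "{c,b}\<in>E" "{c,d}\<in>E" "{d,c}\<in>E" "{d,a}\<in>E" "{a,d}\<in>E"
  using assms unfolding sq_cycle_def by (simp_all add: insert_commute)

context SP begin

lemma rel_R_from_dv: "(a,b) \<in> delta E \<Longrightarrow> a \<in> inc E v \<or> b \<in> inc E v \<Longrightarrow> (a,b) \<in> R"
proof -
  assume d: "(a,b) \<in> delta E" and i: "a \<in> inc E v \<or> b \<in> inc E v"
  have "(a,b) \<in> dv E v" using d i unfolding dv_def delta_def by blast
  then show ?thesis using dv_sub_star[of E v] by blast
qed

lemma Rtrans: "(a,b) \<in> R \<Longrightarrow> (b,c) \<in> R \<Longrightarrow> (a,c) \<in> R"
  using equiv_dv_star[of E v] unfolding equiv_def by (meson transD)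
lemma Rsym: "(a,b) \<in> R \<Longrightarrow> (b,a) \<in> R"
  using equiv_dv_star[of E v] unfolding equiv_def by (meson symD)

lemma X_inj: assumes "u \<in> N1" "w \<in> N2" "u' \<in> N1" "w' \<in> N2" "X u w = X u' w'"
  shows "u = u' \<and> w = w'"
proof (rule ccontr)
  assume nn: "\<not> (u = u' \<and> w = w')"
  define x where "x = X u w"
  have s1: "sq_cycle E v u x w" and c1: "chordless_sq E v u x w"
    using X_props(1,2)[OF assms(1,2)] x_def by auto
  have s2: "sq_cycle E v u' x w'" using X_props(1)[OF assms(3,4)] x_def assms(5) by auto
  have vu: "{v,u} \<in> p1" "{v,u} \<in> inc E v" using N1E[OF assms(1)] by (auto simp: inc_def)
  have vw: "{v,w} \<in> p2" "{v,w} \<in> inc E v" using N2E[OF assms(2)] by (auto simp: inc_def)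
  have nR: "({v,u},{v,w}) \<notin> R" using rel_diff vu vw by blast
  show False
  proof (cases "w = w'")
    case False
    have q1: "sq_cycle E u v w x" using sq_rot[OF s1] .
    have "u \<noteq> w'" using N_disj assms(1,4) by blast
    then have q2: "sq_cycle E u v w' x"
      using sq_D[OF s1] sq_D[OF s2] by (intro sq_intro) auto
    have "({u,v},{u,x}) \<in> delta E" by (rule two_sq_delta[OF q1 q2 False])
    then have r1: "({v,u},{u,x}) \<in> R" using rel_R_from_dv vu by (simp add: insert_commute)
    have "({u,x},{w,v}) \<in> delta E" using opp_delta(1)[OF c1] .
    then have r2: "({u,x},{v,w}) \<in> R" using rel_R_from_dv vw by (simp add: insert_commute)
    show False using Rtrans[OF r1 r2] nR by blast
  next
    case True
    then have uu: "u \<noteq> u'" using nn by blast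
    have q1: "sq_cycle E w v u x" using sq_D[OF s1] by (intro sq_intro) auto
    have "u' \<noteq> w" using N_disj assms(3,2) by blast
    then have q2: "sq_cycle E w v u' x"
      using sq_D[OF s1] sq_D[OF s2] True by (intro sq_intro) auto
    have "({w,v},{w,x}) \<in> delta E" by (rule two_sq_delta[OF q1 q2 uu])
    then have r1: "({v,w},{w,x}) \<in> R" using rel_R_from_dv vw by (simp add: insert_commute)
    have "({v,u},{x,w}) \<in> delta E" using opp_delta(2)[OF c1] .
    then have r2: "({v,u},{w,x}) \<in> R" using rel_R_from_dv vu by (simp add: insert_commute)
    show False using Rtrans[OF r2 Rsym[OF r1]] nR by blast
  qed
qed

end

context SP begin

definition "T1 = {{v,u} | u. u \<in> N1}"
definition "T2 = {{v,w} | w. w \<in> N2}"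
definition "T3 = {{u, X u w} | u w. u \<in> N1 \<and> w \<in> N2}"
definition "T4 = {{w, X u w} | u w. u \<in> N1 \<and> w \<in> N2}"

lemma inc_eq: "inc E v = T1 \<union> T2"
proof
  show "inc E v \<subseteq> T1 \<union> T2"
  proof
    fix e assume "e \<in> inc E v"
    then obtain u where u: "e = {v,u}" "{v,u} \<in> E" using inc_form[OF G] by blast
    then have "u \<in> N1 \<or> u \<in> N2" using N_cover by blast
    then show "e \<in> T1 \<union> T2" unfolding T1_def T2_def using u by blast
  qed
  show "T1 \<union> T2 \<subseteq> inc E v"
    unfolding T1_def T2_def inc_def using N1E N2E by blast
qed

lemma Fv_eq: "Fv E v = T3 \<union> T4"
proof
  show "Fv E v \<subseteq> T3 \<union> T4"
  proof
    fix g assume "g \<in> Fv E v"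
    then obtain u0 w0 x0 where h: "{v,u0} \<in> E" "{v,w0} \<in> E" "({v,u0},{v,w0}) \<notin> R"
      "chordless_sq E v u0 x0 w0" "g = {u0,x0} \<or> g = {x0,w0}"
      unfolding Fv_def by blast
    have sq: "sq_cycle E v u0 x0 w0" using h(4) by (simp add: chordless_sq_def)
    have c0: "u0 \<in> N1 \<or> u0 \<in> N2" "w0 \<in> N1 \<or> w0 \<in> N2" using N_cover h(1,2) by blast+
    show "g \<in> T3 \<union> T4"
    proof (cases "u0 \<in> N1")
      case True
      have "w0 \<notin> N1"
      proof
        assume "w0 \<in> N1"
        then have "({v,u0},{v,w0}) \<in> R" using rel_same_gen[OF p1q] N1E True by blast
        with h(3) show False by blast
      qed
      then have w: "w0 \<in> N2" using c0 by blast
      have "x0 = X u0 w0" using X_props(3)[OF True w sq] .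
      then show ?thesis using h(5) True w unfolding T3_def T4_def by (auto simp: insert_commute)
    next
      case False
      then have u: "u0 \<in> N2" using c0 by blast
      have "w0 \<notin> N2"
      proof
        assume "w0 \<in> N2"
        then have "({v,u0},{v,w0}) \<in> R" using rel_same_gen[OF p2q] N2E u by blast
        with h(3) show False by blast
      qed
      then have w: "w0 \<in> N1" using c0 by blast
      have "x0 = X w0 u0" using X_props(3)[OF w u sq_rev[OF sq]] .
      then show ?thesis using h(5) u w unfolding T3_def T4_def by (auto simp: insert_commute)
    qed
  qed
  show "T3 \<union> T4 \<subseteq> Fv E v"
  proof
    fix g assume "g \<in> T3 \<union> T4"
    then obtain u w where uw: "u \<in> N1" "w \<in> N2" "g = {u, X u w} \<or> g = {X u w, w}"
      unfolding T3_def T4_def by (auto simp: insert_commute)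
    note xf = X_facts[OF uw(1,2)]
    have gE: "g \<in> E" using uw(3) xf by blast
    have "v \<notin> g" using uw(3) xf N1E[OF uw(1)] N2E[OF uw(2)] by auto
    then have gi: "g \<in> E - inc E v" using gE by (simp add: inc_def)
    have "({v,u},{v,w}) \<notin> R" using rel_diff N1E[OF uw(1)] N2E[OF uw(2)] by blast
    moreover have "{v,u} \<in> E" "{v,w} \<in> E" using N1E[OF uw(1)] N2E[OF uw(2)] by auto
    ultimately show "g \<in> Fv E v" unfolding Fv_def using gi uw(3) X_props(2)[OF uw(1,2)] by blast
  qed
qed

lemma SvE_eq: "Sv_E E v = T1 \<union> T2 \<union> T3 \<union> T4"
  unfolding Sv_E_def inc_eq Fv_eq by blast

end

context SP begin

definition gg where "gg p = (if fst p = v then snd p else if snd p = v then fst p else X (fst p) (snd p))"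
abbreviation "AA \<equiv> insert v N1 \<times> insert v N2"
abbreviation "PE \<equiv> cprod_E (insert v N1) T1 (insert v N2) T2"

lemma gg1[simp]: "gg (v,b) = b" by (simp add: gg_def)
lemma gg2[simp]: "gg (a,v) = a" by (simp add: gg_def)
lemma gg3: "u \<in> N1 \<Longrightarrow> w \<in> N2 \<Longrightarrow> gg (u,w) = X u w"
  using N1E N2E by (simp add: gg_def)

lemma img_PE: "(`) gg ` PE = T1 \<union> T2 \<union> T3 \<union> T4"
proof
  show "(`) gg ` PE \<subseteq> T1 \<union> T2 \<union> T3 \<union> T4"
  proof
    fix Y assume "Y \<in> (`) gg ` PE"
    then obtain S where YS: "Y = gg ` S" "S \<in> PE" by blast
    then obtain a b a' b' where S: "S = {(a,b),(a',b')}" "a \<in> insert v N1" "a' \<in> insert v N1"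
      "b \<in> insert v N2" "b' \<in> insert v N2"
      "(a = a' \<and> {b,b'} \<in> T2) \<or> (b = b' \<and> {a,a'} \<in> T1)"
      unfolding cprod_E_def by blast
    show "Y \<in> T1 \<union> T2 \<union> T3 \<union> T4"
    proof (cases "a = a' \<and> {b,b'} \<in> T2")
      case True
      then obtain w where w: "w \<in> N2" "{b,b'} = {v,w}" unfolding T2_def by blast
      have "S = {(a,v),(a,w)}" using dbl_cases[OF w(2)] S(1) True by (auto simp: insert_commute)
      then have Y: "Y = {a, gg (a,w)}" using YS by simp
      show ?thesis
      proof (cases "a = v")
        case True then show ?thesis using Y w unfolding T2_def by auto
      next
        case False then have "a \<in> N1" using S(2) by blast
        then have "Y = {a, X a w}" using Y w gg3 by simp
        then show ?thesis using w \<open>a \<in> N1\<close> unfolding T3_def by blast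
      qed
    next
      case False
      then have F: "b = b'" "{a,a'} \<in> T1" using S(6) by blast+
      then obtain u where u: "u \<in> N1" "{a,a'} = {v,u}" unfolding T1_def by blast
      have "S = {(v,b),(u,b)}" using dbl_cases[OF u(2)] S(1) F by (auto simp: insert_commute)
      then have Y: "Y = {b, gg (u,b)}" using YS by simp
      show ?thesis
      proof (cases "b = v")
        case True then show ?thesis using Y u unfolding T1_def by (auto simp: insert_commute)
      next
        case False then have "b \<in> N2" using S(4) by blast
        then have "Y = {b, X u b}" using Y u gg3 by simp
        then show ?thesis using u \<open>b \<in> N2\<close> unfolding T4_def by blast
      qed
    qed
  qed
  show "T1 \<union> T2 \<union> T3 \<union> T4 \<subseteq> (`) gg ` PE"
  proof
    fix Y assume "Y \<in> T1 \<union> T2 \<union> T3 \<union> T4"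
    then consider (a) u where "u \<in> N1" "Y = {v,u}" | (b) w where "w \<in> N2" "Y = {v,w}"
      | (c) u w where "u \<in> N1" "w \<in> N2" "Y = {u, X u w}"
      | (d) u w where "u \<in> N1" "w \<in> N2" "Y = {w, X u w}"
      unfolding T1_def T2_def T3_def T4_def by blast
    then show "Y \<in> (`) gg ` PE"
    proof cases
      case a
      have "{(v,v),(u,v)} \<in> PE" unfolding cprod_E_def T1_def using a by blast
      moreover have "Y = gg ` {(v,v),(u,v)}" using a by simp
      ultimately show ?thesis by blast
    next
      case b
      have "{(v,v),(v,w)} \<in> PE" unfolding cprod_E_def T2_def using b by blast
      moreover have "Y = gg ` {(v,v),(v,w)}" using b by simp
      ultimately show ?thesis by blast
    next
      case c
      have "{(u,v),(u,w)} \<in> PE" unfolding cprod_E_def T2_def using c by blast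
      moreover have "Y = gg ` {(u,v),(u,w)}" using c gg3 by simp
      ultimately show ?thesis by blast
    next
      case d
      have "{v,u} = {u,v}" by (simp add: insert_commute)
      then have "{(v,w),(u,w)} \<in> PE" unfolding cprod_E_def T1_def using d by blast
      moreover have "Y = gg ` {(v,w),(u,w)}" using d gg3 by simp
      ultimately show ?thesis by blast
    qed
  qed
qed

lemma PE_sub: "\<forall>S\<in>PE. S \<subseteq> AA"
  unfolding cprod_E_def by blast

lemma gg_cases: "p \<in> AA \<Longrightarrow> (p = (v,v) \<and> gg p = v) \<or> (fst p \<in> N1 \<and> snd p = v \<and> gg p = fst p)
   \<or> (fst p = v \<and> snd p \<in> N2 \<and> gg p = snd p) \<or> (fst p \<in> N1 \<and> snd p \<in> N2 \<and> gg p = X (fst p) (snd p))"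
  using gg3 by (cases p) auto

lemma gg_inj: "inj_on gg AA"
proof (rule inj_onI)
  fix p q assume p: "p \<in> AA" and q: "q \<in> AA" and e: "gg p = gg q"
  have f1: "\<forall>u\<in>N1. u \<noteq> v" "\<forall>w\<in>N2. w \<noteq> v" "\<forall>u\<in>N1. u \<notin> N2" using N1E N2E N_disj by blast+
  have f2: "\<forall>u\<in>N1. \<forall>w\<in>N2. X u w \<noteq> v \<and> X u w \<notin> N1 \<and> X u w \<notin> N2" using X_facts by blast
  have f3: "\<forall>u\<in>N1. \<forall>w\<in>N2. \<forall>u'\<in>N1. \<forall>w'\<in>N2. X u w = X u' w' \<longrightarrow> u = u' \<and> w = w'"
    using X_inj by blast
  show "p = q" using gg_cases[OF p] gg_cases[OF q] e f1 f2 f3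
    by (elim disjE conjE; metis prod_eq_iff)
qed

lemma Union_PE: "\<Union> PE = AA"
proof
  show "\<Union> PE \<subseteq> AA" using PE_sub by blast
  show "AA \<subseteq> \<Union> PE"
  proof
    fix p assume p: "p \<in> AA"
    obtain a b where ab: "p = (a,b)" by (cases p)
    obtain u0 where u0: "u0 \<in> N1" using N1ne by blast
    show "p \<in> \<Union> PE"
    proof (cases "a = v")
      case True
      have "{(v,b),(u0,b)} \<in> PE" unfolding cprod_E_def T1_def using p ab u0 by blast
      then show ?thesis using ab True by blast
    next
      case False
      then have a: "a \<in> N1" using p ab by blast
      have "{v,a} = {a,v}" by (simp add: insert_commute)
      then have "{(a,b),(v,b)} \<in> PE" unfolding cprod_E_def T1_def using p ab a by blast
      then show ?thesis using ab by blast
    qed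
  qed
qed

lemma main_iso: "graph_iso (Sv_V E v) (Sv_E E v)
                 (cprod_V (star_V p1 v) (star_V p2 v))
                 (cprod_E (star_V p1 v) (star_E p1 v) (star_V p2 v) (star_E p2 v))"
proof -
  have se: "star_E p1 v = T1" "star_E p2 v = T2" by (simp_all add: star_E_def T1_def T2_def)
  have sv: "star_V p1 v = insert v N1" "star_V p2 v = insert v N2" by (simp_all add: star_V_def)
  have E': "Sv_E E v = (`) gg ` PE" using SvE_eq img_PE by simp
  have "Sv_V E v = gg ` AA" unfolding Sv_V_def E' Union_PE[symmetric] by blast
  then have b: "bij_betw gg AA (Sv_V E v)" using gg_inj by (simp add: bij_betw_def)
  have "\<forall>p\<in>AA. \<forall>q\<in>AA. {gg p, gg q} \<in> Sv_E E v \<longleftrightarrow> {p,q} \<in> PE"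
    unfolding E' using img_edge_iff[OF gg_inj PE_sub] by blast
  then show ?thesis unfolding se sv cprod_V_def using graph_iso_inv[OF b] by blast
qed

end


lemma class_in_SC: assumes "e \<in> inc E v" shows "dv_star E v `` {e} \<in> star_classes E v \<and> e \<in> dv_star E v `` {e}"
proof -
  have eE: "e \<in> E" using assms by (simp add: inc_def)
  have "e \<in> dv_star E v `` {e}" using equiv_class_self[OF equiv_dv_star eE] .
  moreover have "dv_star E v `` {e} \<in> E // dv_star E v" using eE by (rule quotientI)
  ultimately show ?thesis using assms unfolding star_classes_def by blast
qed

lemma case1:
  assumes G: "graph V E" and sc: "star_classes E v = {\<phi>}"
  shows "graph_iso (Sv_V E v) (Sv_E E v) (star_V \<phi> v) (star_E \<phi> v)"
proof -
  have "\<phi> \<in> star_classes E v" using sc by simp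
  then have pq: "\<phi> \<in> E // dv_star E v" "\<phi> \<inter> inc E v \<noteq> {}" unfolding star_classes_def by simp_all
  have allin: "e \<in> \<phi>" if e: "e \<in> inc E v" for e
  proof -
    have a: "dv_star E v `` {e} \<in> star_classes E v" and b: "e \<in> dv_star E v `` {e}"
      using class_in_SC[OF e] by (rule conjunct1, rule conjunct2)
    from a sc have "dv_star E v `` {e} = \<phi>" by simp
    with b show ?thesis by simp
  qed
  have "Fv E v = {}"
  proof (rule ccontr)
    assume "Fv E v \<noteq> {}"
    then obtain g u w where h: "{v,u} \<in> E" "{v,w} \<in> E" "({v,u},{v,w}) \<notin> dv_star E v"
      unfolding Fv_def by blast
    have "{v,u} \<in> \<phi>" "{v,w} \<in> \<phi>" using allin h(1,2) by (auto simp: inc_def)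
    then show False using rel_same_gen[OF pq(1)] h(3) by blast
  qed
  then have SE: "Sv_E E v = inc E v" by (simp add: Sv_E_def)
  have SE2: "star_E \<phi> v = inc E v"
  proof
    show "star_E \<phi> v \<subseteq> inc E v" unfolding star_E_def N_phi_def inc_def using quot_sub[OF pq(1)] by blast
    show "inc E v \<subseteq> star_E \<phi> v"
    proof
      fix e assume e: "e \<in> inc E v"
      then obtain u where "e = {v,u}" using inc_form[OF G] by blast
      then show "e \<in> star_E \<phi> v" using allin[OF e] unfolding star_E_def N_phi_def by blast
    qed
  qed
  have SV: "Sv_V E v = star_V \<phi> v"
  proof
    show "Sv_V E v \<subseteq> star_V \<phi> v"
    proof
      fix x assume "x \<in> Sv_V E v"
      then obtain e where e: "e \<in> inc E v" "x \<in> e" unfolding Sv_V_def SE by blast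
      then obtain u where "e = {v,u}" using inc_form[OF G] by blast
      then show "x \<in> star_V \<phi> v" using allin[OF e(1)] e(2) unfolding star_V_def N_phi_def by blast
    qed
    show "star_V \<phi> v \<subseteq> Sv_V E v"
    proof
      fix x assume x: "x \<in> star_V \<phi> v"
      obtain e0 where "e0 \<in> \<phi>" "e0 \<in> inc E v" using pq(2) by blast
      then have "v \<in> Sv_V E v" unfolding Sv_V_def SE inc_def by blast
      moreover have "x \<noteq> v \<Longrightarrow> {v,x} \<in> inc E v" using x quot_sub[OF pq(1)]
        unfolding star_V_def N_phi_def inc_def by blast
      ultimately show "x \<in> Sv_V E v" unfolding Sv_V_def SE by blast
    qed
  qed
  show ?thesis unfolding graph_iso_def SV SE SE2[symmetric]
    by (rule exI[of _ id]) simp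
qed

theorem corollary3p8:
  fixes V :: "'a set" and E :: "'a set set" and v :: 'a
  assumes "graph V E" and "v \<in> V"
    and "card (star_classes E v) = 1 \<or> card (star_classes E v) = 2"
  shows "(card (star_classes E v) = 1 \<longrightarrow>
            (\<forall>\<phi>\<in>star_classes E v.
               graph_iso (Sv_V E v) (Sv_E E v) (star_V \<phi> v) (star_E \<phi> v)))
       \<and> (card (star_classes E v) = 2 \<longrightarrow>
            (\<forall>\<phi>1\<in>star_classes E v. \<forall>\<phi>2\<in>star_classes E v. \<phi>1 \<noteq> \<phi>2 \<longrightarrow>
               graph_iso (Sv_V E v) (Sv_E E v)
                 (cprod_V (star_V \<phi>1 v) (star_V \<phi>2 v))
                 (cprod_E (star_V \<phi>1 v) (star_E \<phi>1 v) (star_V \<phi>2 v) (star_E \<phi>2 v))))"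
proof (intro conjI impI ballI)
  fix \<phi> assume c: "card (star_classes E v) = 1" and p: "\<phi> \<in> star_classes E v"
  obtain \<phi>0 where "star_classes E v = {\<phi>0}" using c card_1_singletonE by blast
  then have "star_classes E v = {\<phi>}" using p by simp
  then show "graph_iso (Sv_V E v) (Sv_E E v) (star_V \<phi> v) (star_E \<phi> v)"
    by (rule case1[OF assms(1)])
next
  fix \<phi>1 \<phi>2 assume c: "card (star_classes E v) = 2" and p1: "\<phi>1 \<in> star_classes E v"
    and p2: "\<phi>2 \<in> star_classes E v" and ne: "\<phi>1 \<noteq> \<phi>2"
  obtain x y where xy: "star_classes E v = {x,y}" using card_2_iff[THEN iffD1, OF c] by blast
  have cls: "\<forall>e\<in>inc E v. e \<in> \<phi>1 \<or> e \<in> \<phi>2"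
  proof
    fix e assume ei: "e \<in> inc E v"
    have a: "dv_star E v `` {e} \<in> star_classes E v" and b: "e \<in> dv_star E v `` {e}"
      using class_in_SC[OF ei] by (rule conjunct1, rule conjunct2)
    from a xy have "dv_star E v `` {e} \<in> {x,y}" by simp
    note this b
    moreover have "\<phi>1 \<in> {x,y}" "\<phi>2 \<in> {x,y}" using p1 p2 xy by auto
    ultimately show "e \<in> \<phi>1 \<or> e \<in> \<phi>2" using ne by blast
  qed
  interpret SP V E v \<phi>1 \<phi>2 using assms(1) p1 p2 ne cls by unfold_locales
  show "graph_iso (Sv_V E v) (Sv_E E v)
                 (cprod_V (star_V \<phi>1 v) (star_V \<phi>2 v))
                 (cprod_E (star_V \<phi>1 v) (star_E \<phi>1 v) (star_V \<phi>2 v) (star_E \<phi>2 v))"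
    by (rule main_iso)
qed


end
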